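(* Let $n\ge 1$ and consider the nonlinear nonautonomous delay system $$\dot{x}_i(t)=-a_{ii}(t)x_i(t)+\sum_{j\neq i}a_{ij}(t)x_j(t)+\sum_{j=1}^n f_{ij}\big(t,x_j(h_{ij}(t))\big),\qquad i=1,\dots,n,\ t\ge t_0,$$ with initial conditions $x_i(t)=\varphi_i(t)$ for $t\le t_0$, $i=1,\dots,n$, where each $\varphi_i$ is continuous. Assume: (i) $a_{ij}$ and $b_{ij}$ are measurable essentially bounded functions; (ii) for each $i,j$, $f_{ij}(t,\cdot)$ is continuous, $f_{ij}(\cdot,u)$ is measurable and locally essentially bounded, and $|f_{ij}(t,u)|\le b_{ij}(t)|u|$; (iii) the $h_{ij}$ are measurable with $h_{ij}(t)\le t$. Set $A_{ij}=\sup_{t\ge t_0}|a_{ij}(t)|$ and $B_{ij}=\sup_{t\ge t_0}|b_{ij}(t)|$. Suppose there exist numbers $a_i>0$ ($i=1,\dots,n$), $\tau>0$ and $t_0\ge 0$ such that $\inf_{t\ge t_0}a_{ii}(t)\ge a_i$ and $t-h_{ij}(t)\le \tau$ for all $i,j$ and $t\ge t_0$, and suppose that the $n\times n$ matrix $M=(m_{ij})$ with entries $m_{ii}=a_i-B_{ii}$ and $m_{ij}=-A_{ij}-B_{ij}$ for $i\neq j$ is an M-matrix. Then every solution $X(t)=(x_1(t),\dots,x_n(t))^T$ of this system satisfies $\lim_{t\to\infty}X(t)=0$.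
   Context: A solution of the initial value problem is a vector function, locally absolutely continuous for $t\ge t_0$, that satisfies the system almost everywhere for $t\ge t_0$ and equals the initial function for $t\le t_0$. A real square matrix $M=(m_{ij})$ is called an M-matrix if $m_{ij}\le 0$ for $i\ne j$ and one of the following equivalent conditions holds: $M$ has a nonnegative inverse $M^{-1}\ge 0$ (entrywise); or the leading principal minors of $M$ are all positive. *)

theory Defs
  imports "HOL-Analysis.Analysis"
begin

definition abs_continuous_on :: "real \<Rightarrow> real \<Rightarrow> (real \<Rightarrow> 'b::real_normed_vector) \<Rightarrow> bool" where
  "abs_continuous_on a b x \<longleftrightarrow>
     (\<forall>\<epsilon>>0. \<exists>\<delta>>0. \<forall>(m::nat) (s::nat \<Rightarrow> real) (t::nat \<Rightarrow> real).
        (\<forall>k<m. a \<le> s k \<and> s k \<le> t k \<and> t k \<le> b) \<and>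
        (\<forall>k<m. \<forall>l<m. k \<noteq> l \<longrightarrow> t k \<le> s l \<or> t l \<le> s k) \<and>
        (\<Sum>k<m. t k - s k) < \<delta>
        \<longrightarrow> (\<Sum>k<m. norm (x (t k) - x (s k))) < \<epsilon>)"

definition loc_abs_continuous_from :: "real \<Rightarrow> (real \<Rightarrow> 'b::real_normed_vector) \<Rightarrow> bool" where
  "loc_abs_continuous_from t0 x \<longleftrightarrow> (\<forall>T\<ge>t0. abs_continuous_on t0 T x)"

definition is_M_matrix :: "real^'n^'n \<Rightarrow> bool" where
  "is_M_matrix M \<longleftrightarrow> (\<forall>i j. i \<noteq> j \<longrightarrow> M $ i $ j \<le> 0) \<and> invertible M \<and>
     (\<forall>i j. matrix_inv M $ i $ j \<ge> 0)"

definition ess_bounded :: "(real \<Rightarrow> real) \<Rightarrow> bool" where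
  "ess_bounded g \<longleftrightarrow> (\<exists>C. AE t in lebesgue. \<bar>g t\<bar> \<le> C)"

definition loc_ess_bounded :: "(real \<Rightarrow> real) \<Rightarrow> bool" where
  "loc_ess_bounded g \<longleftrightarrow> (\<forall>S T. \<exists>C. AE t in lebesgue. t \<in> {S..T} \<longrightarrow> \<bar>g t\<bar> \<le> C)"

definition is_solution ::
  "('n::finite \<Rightarrow> 'n \<Rightarrow> real \<Rightarrow> real) \<Rightarrow> ('n \<Rightarrow> 'n \<Rightarrow> real \<Rightarrow> real \<Rightarrow> real) \<Rightarrow>
   ('n \<Rightarrow> 'n \<Rightarrow> real \<Rightarrow> real) \<Rightarrow> ('n \<Rightarrow> real \<Rightarrow> real) \<Rightarrow> real \<Rightarrow> (real \<Rightarrow> real^'n) \<Rightarrow> bool" where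
  "is_solution a f h \<phi> t0 x \<longleftrightarrow>
     loc_abs_continuous_from t0 x \<and>
     (AE t in lebesgue. t \<ge> t0 \<longrightarrow>
        (x has_vector_derivative
          (\<chi> i. - a i i t * x t $ i + (\<Sum>j\<in>UNIV - {i}. a i j t * x t $ j)
                 + (\<Sum>j\<in>UNIV. f i j t (x (h i j t) $ j)))) (at t)) \<and>
     (\<forall>t\<le>t0. \<forall>i. x t $ i = \<phi> i t)"

end

theory Submission
  imports Defs
begin

lemma acD:
  assumes "abs_continuous_on a b g" "e > 0"
  obtains d where "d > 0" "\<And>(m::nat) s t. \<lbrakk>\<forall>k<m. a \<le> s k \<and> s k \<le> t k \<and> t k \<le> b;
        \<forall>k<m. \<forall>l<m. k \<noteq> l \<longrightarrow> t k \<le> s l \<or> t l \<le> s k;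
        (\<Sum>k<m. t k - s k) < d\<rbrakk> \<Longrightarrow> (\<Sum>k<m. norm (g (t k) - g (s k))) < e"
proof -
  obtain d where "d > 0" and H: "\<forall>(m::nat) s t. (\<forall>k<m. a \<le> s k \<and> s k \<le> t k \<and> t k \<le> b) \<and>
        (\<forall>k<m. \<forall>l<m. k \<noteq> l \<longrightarrow> t k \<le> s l \<or> t l \<le> s k) \<and>
        (\<Sum>k<m. t k - s k) < d \<longrightarrow> (\<Sum>k<m. norm (g (t k) - g (s k))) < e"
    using assms unfolding abs_continuous_on_def by blast
  show thesis by (rule that[OF \<open>d > 0\<close>]) (use H in blast)
qed

lemma ac_continuous:
  fixes g :: "real \<Rightarrow> 'b::real_normed_vector"
  assumes "abs_continuous_on a b g"
  shows "continuous_on {a..b} g"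
  unfolding continuous_on_iff
proof (intro ballI allI impI)
  fix u e assume u: "u \<in> {a..b}" and e: "(0::real) < e"
  obtain d where d: "d > 0" and H: "\<And>(m::nat) s t. \<lbrakk>\<forall>k<m. a \<le> s k \<and> s k \<le> t k \<and> t k \<le> b;
        \<forall>k<m. \<forall>l<m. k \<noteq> l \<longrightarrow> t k \<le> s l \<or> t l \<le> s k;
        (\<Sum>k<m. t k - s k) < d\<rbrakk> \<Longrightarrow> (\<Sum>k<m. norm (g (t k) - g (s k))) < e"
    by (rule acD[OF assms e], blast)
  show "\<exists>d>0. \<forall>x'\<in>{a..b}. dist x' u < d \<longrightarrow> dist (g x') (g u) < e"
  proof (intro exI conjI ballI impI)
    fix v assume v: "v \<in> {a..b}" "dist v u < d"
    have "(\<Sum>k<(1::nat). norm (g ((\<lambda>_. max u v) k) - g ((\<lambda>_. min u v) k))) < e"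
      by (rule H) (use u v in \<open>auto simp: dist_real_def\<close>)
    then show "dist (g v) (g u) < e"
      by (cases "u \<le> v") (auto simp: dist_norm norm_minus_commute max_def min_def)
  qed (rule d)
qed

lemma ac_sub:
  assumes "abs_continuous_on a b g" "a \<le> c" "d \<le> b"
  shows "abs_continuous_on c d g"
  unfolding abs_continuous_on_def
proof (intro allI impI)
  fix e :: real assume "e > 0"
  then obtain \<delta> where "\<delta> > 0" and H: "\<And>(m::nat) s t. \<lbrakk>\<forall>k<m. a \<le> s k \<and> s k \<le> t k \<and> t k \<le> b;
        \<forall>k<m. \<forall>l<m. k \<noteq> l \<longrightarrow> t k \<le> s l \<or> t l \<le> s k;
        (\<Sum>k<m. t k - s k) < \<delta>\<rbrakk> \<Longrightarrow> (\<Sum>k<m. norm (g (t k) - g (s k))) < e"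
    by (rule acD[OF assms(1)], blast)
  show "\<exists>\<delta>>0. \<forall>(m::nat) s t. (\<forall>k<m. c \<le> s k \<and> s k \<le> t k \<and> t k \<le> d) \<and>
        (\<forall>k<m. \<forall>l<m. k \<noteq> l \<longrightarrow> t k \<le> s l \<or> t l \<le> s k) \<and>
        (\<Sum>k<m. t k - s k) < \<delta> \<longrightarrow> (\<Sum>k<m. norm (g (t k) - g (s k))) < e"
  proof (intro exI[of _ \<delta>] conjI allI impI)
    fix m :: nat and s t assume "(\<forall>k<m. c \<le> s k \<and> s k \<le> t k \<and> t k \<le> d) \<and>
        (\<forall>k<m. \<forall>l<m. k \<noteq> l \<longrightarrow> t k \<le> s l \<or> t l \<le> s k) \<and> (\<Sum>k<m. t k - s k) < \<delta>"
    then show "(\<Sum>k<m. norm (g (t k) - g (s k))) < e"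
      using assms(2,3) by (intro H) force+
  qed fact
qed

lemma ac_lin:
  fixes x :: "real \<Rightarrow> real^'n"
  assumes "abs_continuous_on a b x"
  shows "abs_continuous_on a b (\<lambda>t. \<sigma> * x t $ i + \<rho> * t)"
  unfolding abs_continuous_on_def
proof (intro allI impI)
  fix e :: real assume e: "e > 0"
  define e1 where "e1 = e / (2 * (\<bar>\<sigma>\<bar> + 1))"
  have e1: "e1 > 0" using e by (simp add: e1_def)
  obtain d where d: "d > 0" and H: "\<And>(m::nat) s t. \<lbrakk>\<forall>k<m. a \<le> s k \<and> s k \<le> t k \<and> t k \<le> b;
        \<forall>k<m. \<forall>l<m. k \<noteq> l \<longrightarrow> t k \<le> s l \<or> t l \<le> s k;
        (\<Sum>k<m. t k - s k) < d\<rbrakk> \<Longrightarrow> (\<Sum>k<m. norm (x (t k) - x (s k))) < e1"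
    by (rule acD[OF assms e1], blast)
  define d' where "d' = min d (e / (2 * (\<bar>\<rho>\<bar> + 1)))"
  have d': "d' > 0" using d e by (simp add: d'_def)
  show "\<exists>\<delta>>0. \<forall>(m::nat) s t. (\<forall>k<m. a \<le> s k \<and> s k \<le> t k \<and> t k \<le> b) \<and>
        (\<forall>k<m. \<forall>l<m. k \<noteq> l \<longrightarrow> t k \<le> s l \<or> t l \<le> s k) \<and> (\<Sum>k<m. t k - s k) < \<delta> \<longrightarrow>
        (\<Sum>k<m. norm (\<sigma> * x (t k) $ i + \<rho> * t k - (\<sigma> * x (s k) $ i + \<rho> * s k))) < e"
  proof (intro exI conjI allI impI, rule d')
    fix m :: nat and s t assume A: "(\<forall>k<m. a \<le> s k \<and> s k \<le> t k \<and> t k \<le> b) \<and>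
        (\<forall>k<m. \<forall>l<m. k \<noteq> l \<longrightarrow> t k \<le> s l \<or> t l \<le> s k) \<and> (\<Sum>k<m. t k - s k) < d'"
    have X: "(\<Sum>k<m. norm (x (t k) - x (s k))) < e1" using A d'_def by (intro H) auto
    have "(\<Sum>k<m. norm (\<sigma> * x (t k) $ i + \<rho> * t k - (\<sigma> * x (s k) $ i + \<rho> * s k)))
        \<le> (\<Sum>k<m. \<bar>\<sigma>\<bar> * norm (x (t k) - x (s k)) + \<bar>\<rho>\<bar> * (t k - s k))"
    proof (rule sum_mono)
      fix k assume k: "k \<in> {..<m}"
      have "norm (\<sigma> * x (t k) $ i + \<rho> * t k - (\<sigma> * x (s k) $ i + \<rho> * s k))
          = \<bar>\<sigma> * (x (t k) - x (s k)) $ i + \<rho> * (t k - s k)\<bar>" by (simp add: algebra_simps)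
      also have "\<dots> \<le> \<bar>\<sigma>\<bar> * \<bar>(x (t k) - x (s k)) $ i\<bar> + \<bar>\<rho>\<bar> * \<bar>t k - s k\<bar>"
        by (metis abs_mult abs_triangle_ineq)
      also have "\<dots> \<le> \<bar>\<sigma>\<bar> * norm (x (t k) - x (s k)) + \<bar>\<rho>\<bar> * (t k - s k)"
        using A k by (intro add_mono mult_left_mono) (auto intro: order_trans[OF _ component_le_norm_cart])
      finally show "norm (\<sigma> * x (t k) $ i + \<rho> * t k - (\<sigma> * x (s k) $ i + \<rho> * s k))
        \<le> \<bar>\<sigma>\<bar> * norm (x (t k) - x (s k)) + \<bar>\<rho>\<bar> * (t k - s k)" .
    qed
    also have "\<dots> = \<bar>\<sigma>\<bar> * (\<Sum>k<m. norm (x (t k) - x (s k))) + \<bar>\<rho>\<bar> * (\<Sum>k<m. t k - s k)"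
      by (simp add: sum.distrib sum_distrib_left)
    also have "\<dots> \<le> \<bar>\<sigma>\<bar> * e1 + \<bar>\<rho>\<bar> * (e / (2 * (\<bar>\<rho>\<bar> + 1)))"
      using X A d'_def by (intro add_mono mult_left_mono) auto
    also have "\<dots> < e"
    proof -
      have "\<bar>\<sigma>\<bar> * e1 < e/2" using e by (simp add: e1_def field_simps)
      moreover have "\<bar>\<rho>\<bar> * (e / (2 * (\<bar>\<rho>\<bar> + 1))) < e/2" using e by (simp add: field_simps)
      ultimately show ?thesis by linarith
    qed
    finally show "(\<Sum>k<m. norm (\<sigma> * x (t k) $ i + \<rho> * t k - (\<sigma> * x (s k) $ i + \<rho> * s k))) < e" .
  qed
qed

lemma comp_facts:
  fixes U :: "real set"
  assumes "open U" "bounded U" "C \<in> components U"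
  shows "C \<noteq> {}" "open C" "bounded C" "\<And>x. x \<in> C \<Longrightarrow> Inf C \<le> x \<and> x \<le> Sup C"
    "{Inf C<..<Sup C} \<subseteq> C" "Inf C < Sup C"
proof -
  show ne: "C \<noteq> {}" using assms in_components_nonempty by blast
  show op: "open C" using assms open_components by blast
  show bd: "bounded C" using assms in_components_subset bounded_subset by blast
  have bb: "bdd_below C" "bdd_above C" using bd bounded_imp_bdd_below bounded_imp_bdd_above by auto
  show "\<And>x. x \<in> C \<Longrightarrow> Inf C \<le> x \<and> x \<le> Sup C" using bb by (auto intro: cInf_lower cSup_upper)
  have iv: "is_interval C" using assms in_components_connected is_interval_connected_1 by blast
  show "{Inf C<..<Sup C} \<subseteq> C"
  proof
    fix y assume y: "y \<in> {Inf C<..<Sup C}"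
    then obtain x1 where "x1 \<in> C" "x1 < y" using cInf_less_iff[OF ne bb(1)] by auto
    moreover obtain x2 where "x2 \<in> C" "y < x2" using y less_cSup_iff[OF ne bb(2)] by auto
    ultimately show "y \<in> C" using iv unfolding is_interval_1 by (meson less_imp_le)
  qed
  obtain x where x: "x \<in> C" using ne by blast
  then obtain e where e: "e > 0" "ball x e \<subseteq> C" using op open_contains_ball by blast
  have "x + e/2 \<in> C" using e by (intro subsetD[OF e(2)]) (auto simp: dist_real_def)
  then have "x + e/2 \<le> Sup C" using bb by (intro cSup_upper)
  moreover have "Inf C \<le> x" using x bb by (intro cInf_lower)
  ultimately show "Inf C < Sup C" using e by linarith
qed

lemma comp_sep:
  fixes U :: "real set"
  assumes "open U" "bounded U" "C \<in> components U" "C' \<in> components U" "C \<noteq> C'"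
  shows "Sup C \<le> Inf C' \<or> Sup C' \<le> Inf C"
proof (rule ccontr)
  assume A: "\<not> (Sup C \<le> Inf C' \<or> Sup C' \<le> Inf C)"
  define z where "z = (max (Inf C) (Inf C') + min (Sup C) (Sup C')) / 2"
  have f1: "Inf C < Sup C" "Inf C' < Sup C'" using comp_facts(6)[OF assms(1,2,3)] comp_facts(6)[OF assms(1,2,4)] by auto
  have "z \<in> {Inf C<..<Sup C}" "z \<in> {Inf C'<..<Sup C'}" using A f1 by (auto simp: z_def)
  then have "z \<in> C \<inter> C'" using comp_facts(5)[OF assms(1,2,3)] comp_facts(5)[OF assms(1,2,4)] by blast
  then show False using components_nonoverlap[OF assms(3,4)] assms(5) by blast
qed

lemma ac_lusin:
  fixes g :: "real \<Rightarrow> real"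
  assumes ac: "abs_continuous_on a b g" and E: "E \<subseteq> {a..b}" and N: "negligible E"
  shows "negligible (g ` E)"
  unfolding negligible_outer_le
proof (intro allI impI)
  fix e :: real assume e: "e > 0"
  have cont: "continuous_on {a..b} g" by (rule ac_continuous[OF ac])
  obtain d where d: "d > 0" and H: "\<And>(m::nat) s t. \<lbrakk>\<forall>k<m. a \<le> s k \<and> s k \<le> t k \<and> t k \<le> b;
        \<forall>k<m. \<forall>l<m. k \<noteq> l \<longrightarrow> t k \<le> s l \<or> t l \<le> s k;
        (\<Sum>k<m. t k - s k) < d\<rbrakk> \<Longrightarrow> (\<Sum>k<m. norm (g (t k) - g (s k))) < e"
    by (rule acD[OF ac e], blast)
  have Eleb: "E \<in> sets lebesgue" using N by (rule negligible_imp_sets)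
  obtain U0 where U0: "open U0" "E \<subseteq> U0" "(U0 - E) \<in> lmeasurable" "emeasure lebesgue (U0 - E) < ennreal d"
    by (rule sets_lebesgue_outer_open[OF Eleb d])
  define U where "U = U0 \<inter> {a-1<..<b+1}"
  have Uo: "open U" using U0 by (auto simp: U_def)
  have Ub: "bounded U" unfolding U_def by (rule bounded_subset[of "{a-1..b+1}"]) auto
  have EU: "E \<subseteq> U" using U0 E by (auto simp: U_def)
  have Um: "U \<in> lmeasurable" using Uo Ub by (rule lmeasurable_open[rotated])
  have mU0: "measure lebesgue (U0 - E) < d"
    using U0(4) emeasure_eq_measure2[OF U0(3)] ennreal_less_iff[OF measure_nonneg] by metis
  have UE: "(U0 - E) \<union> E \<in> lmeasurable" by (rule fmeasurable.Un[OF U0(3) negligible_imp_measurable[OF N]])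
  have "measure lebesgue U \<le> measure lebesgue ((U0 - E) \<union> E)"
    by (rule measure_mono_fmeasurable[OF _ fmeasurableD[OF Um] UE]) (auto simp: U_def)
  also have "\<dots> \<le> measure lebesgue (U0 - E) + measure lebesgue E"
    using U0 N by (intro measure_Un_le) (auto simp: negligible_imp_sets fmeasurableD)
  also have "measure lebesgue E = 0" using N negligible_imp_measure0 by blast
  finally have mU: "measure lebesgue U < d" using mU0 by linarith
  define D where "D = {C \<in> components U. C \<inter> {a..b} \<noteq> {}}"
  have DC: "\<And>C. C \<in> D \<Longrightarrow> C \<in> components U" by (auto simp: D_def)
  have cD: "countable D"
  proof -
    have "countable (components U)"
    proof (rule countable_disjoint_open_subsets)
      show "\<And>S. S \<in> components U \<Longrightarrow> open S" using Uo open_components by blast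
      show "pairwise disjnt (components U)" unfolding pairwise_def disjnt_def using components_nonoverlap by blast
    qed
    then show ?thesis by (rule countable_subset[rotated]) (auto simp: D_def)
  qed
  define I where "I C = {max a (Inf C) .. min b (Sup C)}" for C :: "real set"
  have Ine: "I C \<noteq> {}" if CD: "C \<in> D" for C
  proof -
    obtain y where "y \<in> C" "y \<in> {a..b}" using CD unfolding D_def by blast
    moreover have "Inf C \<le> y \<and> y \<le> Sup C" using comp_facts(4)[OF Uo Ub DC[OF CD]] \<open>y \<in> C\<close> by blast
    ultimately have "y \<in> I C" by (auto simp: I_def)
    then show ?thesis by blast
  qed
  have Isub: "I C \<subseteq> {a..b}" for C by (auto simp: I_def)
  have "\<forall>C\<in>D. \<exists>p\<in>I C. \<forall>y\<in>I C. g p \<le> g y"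
  proof
    fix C assume CD: "C \<in> D"
    show "\<exists>p\<in>I C. \<forall>y\<in>I C. g p \<le> g y"
    proof (rule continuous_attains_inf)
      show "compact (I C)" by (simp add: I_def)
      show "I C \<noteq> {}" by (rule Ine[OF CD])
      show "continuous_on (I C) g" by (rule continuous_on_subset[OF cont Isub])
    qed
  qed
  then obtain p where p: "\<And>C. C \<in> D \<Longrightarrow> p C \<in> I C \<and> (\<forall>y\<in>I C. g (p C) \<le> g y)" by metis
  have "\<forall>C\<in>D. \<exists>q\<in>I C. \<forall>y\<in>I C. g y \<le> g q"
  proof
    fix C assume CD: "C \<in> D"
    show "\<exists>q\<in>I C. \<forall>y\<in>I C. g y \<le> g q"
    proof (rule continuous_attains_sup)
      show "compact (I C)" by (simp add: I_def)
      show "I C \<noteq> {}" by (rule Ine[OF CD])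
      show "continuous_on (I C) g" by (rule continuous_on_subset[OF cont Isub])
    qed
  qed
  then obtain q where q: "\<And>C. C \<in> D \<Longrightarrow> q C \<in> I C \<and> (\<forall>y\<in>I C. g y \<le> g (q C))" by metis
  define J where "J C = {g (p C) .. g (q C)}" for C
  show "\<exists>T. g ` E \<subseteq> T \<and> T \<in> lmeasurable \<and> measure lebesgue T \<le> e"
  proof (intro exI conjI)
    show "g ` E \<subseteq> (\<Union>C\<in>D. J C)"
    proof
      fix z assume "z \<in> g ` E"
      then obtain y where y: "y \<in> E" "z = g y" by blast
      define C where "C = connected_component_set U y"
      have yU: "y \<in> U" using y EU by blast
      have CU: "C \<in> components U" using yU by (auto simp: C_def components_iff)
      have yC: "y \<in> C" using yU by (simp add: C_def)
      have CD: "C \<in> D" using CU yC y E by (auto simp: D_def)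
      have "y \<in> I C" using comp_facts(4)[OF Uo Ub CU yC] y E by (auto simp: I_def)
      then have "z \<in> J C" using p[OF CD] q[OF CD] y by (auto simp: J_def)
      then show "z \<in> (\<Union>C\<in>D. J C)" using CD by blast
    qed
    have Jm: "\<And>C. C \<in> D \<Longrightarrow> J C \<in> lmeasurable" by (auto simp: J_def)
    have bound: "measure lebesgue (\<Union>C\<in>F. J C) \<le> e" if F: "F \<subseteq> D" "finite F" for F
    proof -
      have "measure lebesgue (\<Union>C\<in>F. J C) \<le> (\<Sum>C\<in>F. measure lebesgue (J C))"
        using F Jm by (intro measure_UNION_le) (auto intro: fmeasurableD)
      also have "\<dots> = (\<Sum>C\<in>F. g (q C) - g (p C))"
      proof (rule sum.cong[OF refl])
        fix C assume "C \<in> F"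
        then have CD: "C \<in> D" using F by blast
        have "g (p C) \<le> g (q C)" using p[OF CD] q[OF CD] by blast
        then show "measure lebesgue (J C) = g (q C) - g (p C)" by (simp add: J_def)
      qed
      also have "\<dots> \<le> e"
      proof -
        obtain \<nu> where \<nu>: "bij_betw \<nu> {0..<card F} F" using ex_bij_betw_nat_finite[OF F(2)] by blast
        define m where "m = card F"
        define s where "s k = min (p (\<nu> k)) (q (\<nu> k))" for k
        define t where "t k = max (p (\<nu> k)) (q (\<nu> k))" for k
        have \<nu>D: "\<nu> k \<in> D" if "k < m" for k using \<nu> F that by (auto simp: m_def bij_betw_def)
        have sum_eq: "(\<Sum>k<m. h (\<nu> k)) = (\<Sum>C\<in>F. h C)" for h :: "real set \<Rightarrow> real"
          using sum.reindex_bij_betw[OF \<nu>, of h] by (simp add: m_def atLeast0LessThan)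
        have st: "\<forall>k<m. a \<le> s k \<and> s k \<le> t k \<and> t k \<le> b"
          using p \<nu>D q Isub by (force simp: s_def t_def)
        have stI: "\<forall>k<m. max a (Inf (\<nu> k)) \<le> s k \<and> t k \<le> min b (Sup (\<nu> k))"
          using p \<nu>D q by (force simp: s_def t_def I_def)
        have sep: "\<forall>k<m. \<forall>l<m. k \<noteq> l \<longrightarrow> t k \<le> s l \<or> t l \<le> s k"
        proof (intro allI impI)
          fix k l assume kl: "k < m" "l < m" "k \<noteq> l"
          have "\<nu> k \<noteq> \<nu> l" using \<nu> kl unfolding bij_betw_def inj_on_def m_def by auto
          then have "Sup (\<nu> k) \<le> Inf (\<nu> l) \<or> Sup (\<nu> l) \<le> Inf (\<nu> k)"
            using comp_sep[OF Uo Ub DC[OF \<nu>D] DC[OF \<nu>D]] kl by blast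
          moreover have "max a (Inf (\<nu> k)) \<le> s k \<and> t k \<le> min b (Sup (\<nu> k))"
            "max a (Inf (\<nu> l)) \<le> s l \<and> t l \<le> min b (Sup (\<nu> l))" using stI kl by blast+
          ultimately show "t k \<le> s l \<or> t l \<le> s k" by linarith
        qed
        have "(\<Sum>k<m. t k - s k) \<le> (\<Sum>k<m. Sup (\<nu> k) - Inf (\<nu> k))"
          using stI by (intro sum_mono) force
        also have "\<dots> = (\<Sum>C\<in>F. Sup C - Inf C)" by (rule sum_eq)
        also have "\<dots> \<le> (\<Sum>C\<in>F. measure lebesgue C)"
        proof (rule sum_mono)
          fix C assume "C \<in> F"
          then have CU: "C \<in> components U" using F DC by blast
          have "Sup C - Inf C = measure lebesgue {Inf C<..<Sup C}"
            using comp_facts(6)[OF Uo Ub CU] by simp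
          also have "\<dots> \<le> measure lebesgue C"
            using comp_facts[OF Uo Ub CU] by (intro measure_mono_fmeasurable) (auto intro: lmeasurable_open fmeasurableD)
          finally show "Sup C - Inf C \<le> measure lebesgue C" .
        qed
        also have "\<dots> = measure lebesgue (\<Union>C\<in>F. C)"
        proof (rule measure_finite_Union[symmetric])
          show "finite F" by fact
          show "(\<lambda>C. C) ` F \<subseteq> sets lebesgue"
            using F DC comp_facts(2,3)[OF Uo Ub] by (auto intro: lmeasurable_open fmeasurableD)
          show "disjoint_family_on (\<lambda>C. C) F"
            using F DC components_nonoverlap unfolding disjoint_family_on_def by blast
          show "emeasure lebesgue C \<noteq> \<infinity>" if "C \<in> F" for C
            using that F DC comp_facts(2,3)[OF Uo Ub] lmeasurable_open[of C] by (auto simp: fmeasurable_def)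
        qed
        also have "\<dots> \<le> measure lebesgue U"
        proof -
          have sub: "(\<Union>C\<in>F. C) \<subseteq> U" using F DC in_components_subset by blast
          have "open (\<Union>C\<in>F. C)" using F DC comp_facts(2)[OF Uo Ub] by blast
          then have "(\<Union>C\<in>F. C) \<in> lmeasurable" using bounded_subset[OF Ub sub] lmeasurable_open by blast
          then show ?thesis by (intro measure_mono_fmeasurable[OF sub fmeasurableD Um])
        qed
        finally have "(\<Sum>k<m. t k - s k) < d" using mU by linarith
        then have "(\<Sum>k<m. norm (g (t k) - g (s k))) < e" using H st sep by blast
        moreover have "(\<Sum>k<m. norm (g (t k) - g (s k))) = (\<Sum>k<m. g (q (\<nu> k)) - g (p (\<nu> k)))"
        proof (rule sum.cong[OF refl])
          fix k assume "k \<in> {..<m}"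
          then have "\<nu> k \<in> D" using \<nu>D by auto
          then have "g (p (\<nu> k)) \<le> g (q (\<nu> k))" using p q by blast
          then show "norm (g (t k) - g (s k)) = g (q (\<nu> k)) - g (p (\<nu> k))"
            by (cases "p (\<nu> k) \<le> q (\<nu> k)") (auto simp: s_def t_def min_def max_def)
        qed
        ultimately show ?thesis using sum_eq[of "\<lambda>C. g (q C) - g (p C)"] by simp
      qed
      finally show ?thesis .
    qed
    show "(\<Union>C\<in>D. J C) \<in> lmeasurable" by (rule fmeasurable_UN_bound[OF cD Jm bound]) auto
    show "measure lebesgue (\<Union>C\<in>D. J C) \<le> e" by (rule measure_UN_bound[OF cD Jm bound]) auto
  qed
qed

lemma ac_max_principle:
  fixes g :: "real \<Rightarrow> real"
  assumes ab: "a \<le> b" and ac: "abs_continuous_on a b g" and N: "negligible E"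
    and der: "\<And>u. u \<in> {a..b} \<Longrightarrow> u \<notin> E \<Longrightarrow> g u > c \<Longrightarrow> \<exists>d<0. (g has_real_derivative d) (at u)"
  shows "g b \<le> max c (g a)"
proof (rule ccontr)
  assume "\<not> g b \<le> max c (g a)"
  then have gb: "g b > max c (g a)" by linarith
  define m where "m = max c (g a)"
  have cont: "continuous_on {a..b} g" by (rule ac_continuous[OF ac])
  have NE: "negligible (g ` (E \<inter> {a..b}))"
    by (rule ac_lusin[OF ac]) (auto intro: negligible_subset[OF N])
  have "\<not> {m<..<g b} \<subseteq> g ` (E \<inter> {a..b})"
  proof
    assume "{m<..<g b} \<subseteq> g ` (E \<inter> {a..b})"
    then have "negligible {m<..<g b}" using NE negligible_subset by blast
    then have "measure lebesgue {m<..<g b} = 0" by (rule negligible_imp_measure0)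
    moreover have mlt: "m < g b" using gb by (simp add: m_def)
    then have "measure lebesgue {m<..<g b} = g b - m" by simp
    ultimately show False using mlt by linarith
  qed
  then obtain y where y: "m < y" "y < g b" "y \<notin> g ` (E \<inter> {a..b})" by (auto simp: subset_iff)
  define S where "S = {a..b} \<inter> g -` {..y}"
  have Sc: "closed S" unfolding S_def by (rule continuous_closed_preimage[OF cont]) auto
  have aS: "a \<in> S" using y ab by (auto simp: S_def m_def)
  have Sb: "bdd_above S" by (auto simp: S_def bdd_above_def)
  define s where "s = Sup S"
  have sS: "s \<in> S" unfolding s_def using aS Sb Sc by (intro closed_contains_Sup) auto
  have after: "g u > y" if "u \<in> {a..b}" "u > s" for u
  proof (rule ccontr)
    assume "\<not> g u > y"
    then have "u \<in> S" using that by (auto simp: S_def)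
    then have "u \<le> s" unfolding s_def using Sb by (rule cSup_upper)
    then show False using that by simp
  qed
  have sab: "a \<le> s" "s \<le> b" using sS by (auto simp: S_def)
  have gs: "g s \<le> y" using sS by (auto simp: S_def)
  have sb: "s < b" using gs y sab by (cases "s = b") auto
  obtain u where u: "s \<le> u" "u \<le> b" "g u = y"
  proof -
    have "continuous_on {s..b} g" using sab by (intro continuous_on_subset[OF cont]) auto
    then show ?thesis using IVT'[of g s y b] gs y sab that by auto
  qed
  have "u = s" using after[of u] u sab by force
  then have gsy: "g s = y" using u by simp
  have sE: "s \<notin> E" using y(3) gsy sab by auto
  have "g s > c" using gsy y by (simp add: m_def)
  then obtain d where d: "d < 0" "(g has_real_derivative d) (at s)" using der sE sab by auto
  obtain \<delta> where \<delta>: "\<delta> > 0" "\<And>h. h > 0 \<Longrightarrow> h < \<delta> \<Longrightarrow> g (s + h) < g s"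
    using DERIV_neg_dec_right[OF d(2) d(1)] by blast
  define h where "h = min (\<delta>/2) (b - s)"
  have h: "h > 0" "h < \<delta>" using \<delta> sb by (auto simp: h_def)
  have "g (s + h) < g s" using \<delta>(2)[OF h] .
  moreover have "s + h \<le> b" by (simp add: h_def)
  then have "g (s + h) > y" using after[of "s + h"] h sab by simp
  ultimately show False using gsy by simp
qed

theorem theorem2p1:
  fixes a b :: "'n::finite \<Rightarrow> 'n \<Rightarrow> real \<Rightarrow> real"
    and f :: "'n \<Rightarrow> 'n \<Rightarrow> real \<Rightarrow> real \<Rightarrow> real"
    and h :: "'n \<Rightarrow> 'n \<Rightarrow> real \<Rightarrow> real"
    and \<phi> :: "'n \<Rightarrow> real \<Rightarrow> real"
    and \<alpha> :: "'n \<Rightarrow> real"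
    and \<tau> t0 :: real
    and x :: "real \<Rightarrow> real^'n"
  assumes phi_cont: "\<And>i. continuous_on {..t0} (\<phi> i)"
    and a_meas: "\<And>i j. a i j \<in> borel_measurable lebesgue"
    and a_bdd: "\<And>i j. ess_bounded (a i j)"
    and b_meas: "\<And>i j. b i j \<in> borel_measurable lebesgue"
    and b_bdd: "\<And>i j. ess_bounded (b i j)"
    and f_cont: "\<And>i j t. continuous_on UNIV (f i j t)"
    and f_meas: "\<And>i j u. (\<lambda>t. f i j t u) \<in> borel_measurable lebesgue"
    and f_loc_bdd: "\<And>i j u. loc_ess_bounded (\<lambda>t. f i j t u)"
    and f_growth: "\<And>i j t u. t \<ge> t0 \<Longrightarrow> \<bar>f i j t u\<bar> \<le> b i j t * \<bar>u\<bar>"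
    and h_meas: "\<And>i j. h i j \<in> borel_measurable lebesgue"
    and h_le: "\<And>i j t. h i j t \<le> t"
    and A_fin: "\<And>i j. bdd_above ((\<lambda>t. \<bar>a i j t\<bar>) ` {t0..})"
    and B_fin: "\<And>i j. bdd_above ((\<lambda>t. \<bar>b i j t\<bar>) ` {t0..})"
    and alpha_pos: "\<And>i. \<alpha> i > 0"
    and tau_pos: "\<tau> > 0"
    and t0_nonneg: "t0 \<ge> 0"
    and a_diag: "\<And>i t. t \<ge> t0 \<Longrightarrow> a i i t \<ge> \<alpha> i"
    and delay_bdd: "\<And>i j t. t \<ge> t0 \<Longrightarrow> t - h i j t \<le> \<tau>"
    and M_matrix: "is_M_matrix (\<chi> i j. if i = j
                        then \<alpha> i - (SUP t\<in>{t0..}. \<bar>b i i t\<bar>)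
                        else - (SUP t\<in>{t0..}. \<bar>a i j t\<bar>) - (SUP t\<in>{t0..}. \<bar>b i j t\<bar>))"
    and sol: "is_solution a f h \<phi> t0 x"
  shows "(x \<longlongrightarrow> 0) at_top"
proof -
  define Am where "Am i j = (SUP t\<in>{t0..}. \<bar>a i j t\<bar>)" for i j
  define Bm where "Bm i j = (SUP t\<in>{t0..}. \<bar>b i j t\<bar>)" for i j
  define Mm :: "real^'n^'n" where "Mm = (\<chi> i j. if i = j then \<alpha> i - Bm i i else - Am i j - Bm i j)"
  have MM: "is_M_matrix Mm" unfolding Mm_def Am_def Bm_def by (rule M_matrix)
  have inv: "invertible Mm" and nonneg: "\<And>i j. matrix_inv Mm $ i $ j \<ge> 0"
    and off: "\<And>i j. i \<noteq> j \<Longrightarrow> Mm $ i $ j \<le> 0"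
    using MM unfolding is_M_matrix_def by auto
  have right: "Mm ** matrix_inv Mm = mat 1"
  proof -
    obtain A' where "Mm ** A' = mat 1 \<and> A' ** Mm = mat 1" using inv unfolding invertible_def by blast
    then have "Mm ** (SOME A'. Mm ** A' = mat 1 \<and> A' ** Mm = mat 1) = mat 1 \<and>
       (SOME A'. Mm ** A' = mat 1 \<and> A' ** Mm = mat 1) ** Mm = mat 1" by (rule someI)
    then show ?thesis unfolding matrix_inv_def by blast
  qed
  define \<xi> :: "real^'n" where "\<xi> = matrix_inv Mm *v (\<chi> i. 1)"
  have M\<xi>: "Mm *v \<xi> = (\<chi> i. 1)"
    by (simp add: \<xi>_def matrix_vector_mul_assoc right matrix_vector_mul_lid)
  have \<xi>nn: "\<xi> $ i \<ge> 0" for i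
    unfolding \<xi>_def matrix_vector_mult_def using nonneg by (simp add: sum_nonneg)
  have Aup: "\<bar>a i j t\<bar> \<le> Am i j" if "t \<ge> t0" for i j t
    unfolding Am_def using that A_fin by (intro cSUP_upper) auto
  have Bup: "\<bar>b i j t\<bar> \<le> Bm i j" if "t \<ge> t0" for i j t
    unfolding Bm_def using that B_fin by (intro cSUP_upper) auto
  have Ann: "Am i j \<ge> 0" for i j using Aup[of t0 i j] by simp
  have Bnn: "Bm i j \<ge> 0" for i j using Bup[of t0 i j] by simp
  have row: "(\<Sum>j\<in>UNIV. Mm $ i $ j * \<xi> $ j) = 1" for i
  proof -
    have "(Mm *v \<xi>) $ i = 1" using M\<xi> by simp
    then show ?thesis by (simp add: matrix_vector_mult_def)
  qed
  have split: "(\<Sum>j\<in>UNIV. F j) = F i + (\<Sum>j\<in>UNIV-{i}. F j)" for F :: "'n \<Rightarrow> real" and i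
    by (rule sum.remove) auto
  have offsum: "(\<Sum>j\<in>UNIV-{i}. Mm $ i $ j * \<xi> $ j) = - (\<Sum>j\<in>UNIV-{i}. Am i j * \<xi> $ j) - (\<Sum>j\<in>UNIV-{i}. Bm i j * \<xi> $ j)" for i
  proof -
    have "(\<Sum>j\<in>UNIV-{i}. Mm $ i $ j * \<xi> $ j) = (\<Sum>j\<in>UNIV-{i}. - (Am i j * \<xi> $ j) - Bm i j * \<xi> $ j)"
      by (rule sum.cong) (auto simp: Mm_def algebra_simps)
    then show ?thesis by (simp add: sum_subtractf sum_negf)
  qed
  have key: "(\<Sum>j\<in>UNIV-{i}. Am i j * \<xi> $ j) + (\<Sum>j\<in>UNIV. Bm i j * \<xi> $ j) = \<alpha> i * \<xi> $ i - 1" for i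
  proof -
    have "1 = Mm $ i $ i * \<xi> $ i + (\<Sum>j\<in>UNIV-{i}. Mm $ i $ j * \<xi> $ j)"
      using row[of i] split[of "\<lambda>j. Mm $ i $ j * \<xi> $ j" i] by simp
    moreover have "(\<Sum>j\<in>UNIV. Bm i j * \<xi> $ j) = Bm i i * \<xi> $ i + (\<Sum>j\<in>UNIV-{i}. Bm i j * \<xi> $ j)"
      by (rule split)
    moreover have "Mm $ i $ i = \<alpha> i - Bm i i" by (simp add: Mm_def)
    ultimately show ?thesis using offsum[of i] by (simp add: algebra_simps)
  qed
  have \<xi>pos: "\<xi> $ i > 0" for i
  proof -
    have "(\<Sum>j\<in>UNIV-{i}. Mm $ i $ j * \<xi> $ j) \<le> 0"
      using off \<xi>nn by (intro sum_nonpos) (auto intro: mult_nonpos_nonneg)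
    moreover have "1 = Mm $ i $ i * \<xi> $ i + (\<Sum>j\<in>UNIV-{i}. Mm $ i $ j * \<xi> $ j)"
      using row[of i] split[of "\<lambda>j. Mm $ i $ j * \<xi> $ j" i] by simp
    ultimately have "Mm $ i $ i * \<xi> $ i \<ge> 1" by linarith
    then have "\<xi> $ i \<noteq> 0" by auto
    then show ?thesis using \<xi>nn[of i] by simp
  qed
  have \<alpha>\<xi>: "\<alpha> i * \<xi> $ i \<ge> 1" for i
  proof -
    have "(\<Sum>j\<in>UNIV-{i}. Am i j * \<xi> $ j) \<ge> 0" "(\<Sum>j\<in>UNIV. Bm i j * \<xi> $ j) \<ge> 0"
      using Ann Bnn \<xi>nn by (auto intro!: sum_nonneg)
    then show ?thesis using key[of i] by linarith
  qed
  define \<Gamma> where "\<Gamma> = Max (range (\<lambda>i. \<alpha> i * \<xi> $ i))"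
  have \<Gamma>ge: "\<alpha> i * \<xi> $ i \<le> \<Gamma>" for i unfolding \<Gamma>_def by (rule Max_ge) auto
  have \<Gamma>1: "\<Gamma> \<ge> 1" using \<Gamma>ge \<alpha>\<xi> order_trans by blast
  define q where "q = 1 - 1 / (2 * \<Gamma>)"
  have q0: "q \<ge> 0" and q1: "q < 1" using \<Gamma>1 by (auto simp: q_def field_simps)
  have qpos: "q > 0" using \<Gamma>1 by (auto simp: q_def field_simps)
  define \<Xi> where "\<Xi> = Max (range (\<lambda>i. \<xi> $ i))"
  have \<Xi>ge: "\<xi> $ i \<le> \<Xi>" for i unfolding \<Xi>_def by (rule Max_ge) auto
  have \<Xi>pos: "\<Xi> > 0" using \<Xi>ge \<xi>pos less_le_trans by blast

  have ACx: "loc_abs_continuous_from t0 x" and AEder: "AE t in lebesgue. t \<ge> t0 \<longrightarrow>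
        (x has_vector_derivative
          (\<chi> i. - a i i t * x t $ i + (\<Sum>j\<in>UNIV - {i}. a i j t * x t $ j)
                 + (\<Sum>j\<in>UNIV. f i j t (x (h i j t) $ j)))) (at t)"
    and init: "\<And>t i. t \<le> t0 \<Longrightarrow> x t $ i = \<phi> i t"
    using sol unfolding is_solution_def by auto
  obtain N where NN: "negligible N" and Nder: "\<And>t. t \<notin> N \<Longrightarrow> t \<ge> t0 \<Longrightarrow>
        (x has_vector_derivative
          (\<chi> i. - a i i t * x t $ i + (\<Sum>j\<in>UNIV - {i}. a i j t * x t $ j)
                 + (\<Sum>j\<in>UNIV. f i j t (x (h i j t) $ j)))) (at t)"
  proof -
    obtain N where N: "\<And>t. t \<in> space lebesgue - N \<Longrightarrow> t \<ge> t0 \<longrightarrow>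
        (x has_vector_derivative
          (\<chi> i. - a i i t * x t $ i + (\<Sum>j\<in>UNIV - {i}. a i j t * x t $ j)
                 + (\<Sum>j\<in>UNIV. f i j t (x (h i j t) $ j)))) (at t)" "N \<in> null_sets lebesgue"
      by (rule AE_E3[OF AEder], blast)
    show thesis by (rule that[of N]) (use N in \<open>auto simp: negligible_iff_null_sets\<close>)
  qed
  have ACi: "abs_continuous_on s t (\<lambda>v. \<sigma> * x v $ i + \<rho> * v)" if "t0 \<le> s" "s \<le> t" for s t \<sigma> \<rho> i
  proof -
    have "abs_continuous_on t0 t x" using ACx that unfolding loc_abs_continuous_from_def by auto
    then have "abs_continuous_on t0 t (\<lambda>v. \<sigma> * x v $ i + \<rho> * v)" by (rule ac_lin)
    then show ?thesis using that(1) by (rule ac_sub) simp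
  qed
  have xcont: "continuous_on {s..t} (\<lambda>v. x v $ i)" if "t0 \<le> s" for s t i
  proof (cases "s \<le> t")
    case True
    then show ?thesis using ac_continuous[OF ACi[OF that True, of 1 i 0]] by simp
  qed simp
  have cder: "((\<lambda>v. x v $ i) has_real_derivative X $ i) (at u)"
    if "(x has_vector_derivative X) (at u)" for X u i
  proof -
    have "(x has_derivative (\<lambda>h. h *\<^sub>R X)) (at u)" using that by (simp add: has_vector_derivative_def)
    then have "((\<lambda>v. x v $ i) has_derivative (\<lambda>h. (h *\<^sub>R X) $ i)) (at u)"
      by (rule bounded_linear.has_derivative[OF bounded_linear_vec_nth])
    moreover have "(\<lambda>h. (h *\<^sub>R X) $ i) = (*) (X $ i)" by (auto simp: mult.commute)
    ultimately show ?thesis by (simp add: has_field_derivative_def)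
  qed
  have DL: "\<exists>D. ((\<lambda>v. \<sigma> * x v $ i) has_real_derivative D) (at u) \<and> D \<le> - K / 2"
    if K: "K \<ge> 0" and u: "u \<ge> t0" "u \<notin> N" and \<sigma>: "\<sigma> = 1 \<or> \<sigma> = -1"
      and win: "\<forall>v\<in>{u-\<tau>..u}. \<forall>j. \<bar>x v $ j\<bar> \<le> K * \<xi> $ j"
      and big: "\<sigma> * x u $ i > q * K * \<xi> $ i" for K u \<sigma> i
  proof -
    define S1 where "S1 = (\<Sum>j\<in>UNIV - {i}. a i j u * x u $ j)"
    define S2 where "S2 = (\<Sum>j\<in>UNIV. f i j u (x (h i j u) $ j))"
    define X :: "real^'n" where "X = (\<chi> i. - a i i u * x u $ i + (\<Sum>j\<in>UNIV - {i}. a i j u * x u $ j)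
                 + (\<Sum>j\<in>UNIV. f i j u (x (h i j u) $ j)))"
    have Xi: "X $ i = - a i i u * x u $ i + S1 + S2" by (simp add: X_def S1_def S2_def)
    have der: "((\<lambda>v. \<sigma> * x v $ i) has_real_derivative \<sigma> * X $ i) (at u)"
      using Nder[OF u(2,1)] unfolding X_def[symmetric] by (intro DERIV_cmult cder)
    have abs\<sigma>: "\<bar>\<sigma>\<bar> = 1" using \<sigma> by auto
    have sig: "\<sigma> * S \<le> \<bar>S\<bar>" for S
    proof -
      have "\<sigma> * S \<le> \<bar>\<sigma> * S\<bar>" by simp
      also have "\<dots> = \<bar>S\<bar>" using abs\<sigma> by (simp add: abs_mult)
      finally show ?thesis .
    qed
    have uwin: "u \<in> {u-\<tau>..u}" using tau_pos by simp
    have S1b: "\<bar>S1\<bar> \<le> (\<Sum>j\<in>UNIV - {i}. Am i j * (K * \<xi> $ j))"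
    proof -
      have "\<bar>S1\<bar> \<le> (\<Sum>j\<in>UNIV - {i}. \<bar>a i j u * x u $ j\<bar>)" unfolding S1_def by (rule sum_abs)
      also have "\<dots> \<le> (\<Sum>j\<in>UNIV - {i}. Am i j * (K * \<xi> $ j))"
      proof (rule sum_mono)
        fix j
        have "\<bar>a i j u * x u $ j\<bar> = \<bar>a i j u\<bar> * \<bar>x u $ j\<bar>" by (simp add: abs_mult)
        also have "\<dots> \<le> Am i j * (K * \<xi> $ j)"
          using Aup[OF u(1)] win uwin Ann by (intro mult_mono) auto
        finally show "\<bar>a i j u * x u $ j\<bar> \<le> Am i j * (K * \<xi> $ j)" .
      qed
      finally show ?thesis .
    qed
    have S2b: "\<bar>S2\<bar> \<le> (\<Sum>j\<in>UNIV. Bm i j * (K * \<xi> $ j))"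
    proof -
      have "\<bar>S2\<bar> \<le> (\<Sum>j\<in>UNIV. \<bar>f i j u (x (h i j u) $ j)\<bar>)" unfolding S2_def by (rule sum_abs)
      also have "\<dots> \<le> (\<Sum>j\<in>UNIV. Bm i j * (K * \<xi> $ j))"
      proof (rule sum_mono)
        fix j
        have hw: "h i j u \<in> {u-\<tau>..u}" using h_le[of i j u] delay_bdd[OF u(1), of i j] by auto
        have "\<bar>f i j u (x (h i j u) $ j)\<bar> \<le> b i j u * \<bar>x (h i j u) $ j\<bar>" by (rule f_growth[OF u(1)])
        also have "\<dots> \<le> Bm i j * \<bar>x (h i j u) $ j\<bar>"
          using Bup[OF u(1), of i j] by (intro mult_right_mono) auto
        also have "\<dots> \<le> Bm i j * (K * \<xi> $ j)" using win hw Bnn by (intro mult_left_mono) auto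
        finally show "\<bar>f i j u (x (h i j u) $ j)\<bar> \<le> Bm i j * (K * \<xi> $ j)" .
      qed
      finally show ?thesis .
    qed
    define y where "y = \<sigma> * x u $ i"
    have y0: "y \<ge> 0"
    proof -
      have "q * K * \<xi> $ i \<ge> 0" using q0 K \<xi>nn by simp
      then show ?thesis using big y_def by linarith
    qed
    have "\<sigma> * X $ i = - a i i u * y + \<sigma> * S1 + \<sigma> * S2" by (simp add: Xi y_def algebra_simps)
    also have "\<dots> \<le> - \<alpha> i * y + \<bar>S1\<bar> + \<bar>S2\<bar>"
      using a_diag[OF u(1), of i] y0 sig[of S1] sig[of S2] by (intro add_mono) (auto intro: mult_right_mono)
    also have "\<dots> \<le> - \<alpha> i * y + K * (\<alpha> i * \<xi> $ i - 1)"
    proof -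
      have "(\<Sum>j\<in>UNIV - {i}. Am i j * (K * \<xi> $ j)) + (\<Sum>j\<in>UNIV. Bm i j * (K * \<xi> $ j))
          = K * ((\<Sum>j\<in>UNIV-{i}. Am i j * \<xi> $ j) + (\<Sum>j\<in>UNIV. Bm i j * \<xi> $ j))"
        by (simp add: sum_distrib_left algebra_simps)
      also have "\<dots> = K * (\<alpha> i * \<xi> $ i - 1)" by (simp add: key)
      finally show ?thesis using S1b S2b by linarith
    qed
    also have "\<dots> \<le> - \<alpha> i * (q * K * \<xi> $ i) + K * (\<alpha> i * \<xi> $ i - 1)"
      using big alpha_pos[of i] y_def by (simp add: mult_left_mono)
    also have "\<dots> = K * (\<alpha> i * \<xi> $ i * (1 - q)) - K" by (simp add: algebra_simps)
    also have "\<dots> \<le> K * (1/2) - K"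
    proof -
      have "\<alpha> i * \<xi> $ i * (1 - q) = (\<alpha> i * \<xi> $ i) / (2 * \<Gamma>)" by (simp add: q_def)
      also have "\<dots> \<le> \<Gamma> / (2 * \<Gamma>)" using \<Gamma>ge[of i] \<Gamma>1 by (intro divide_right_mono) auto
      also have "\<dots> = 1/2" using \<Gamma>1 by simp
      finally have "\<alpha> i * \<xi> $ i * (1 - q) \<le> 1/2" .
      then have "K * (\<alpha> i * \<xi> $ i * (1 - q)) \<le> K * (1/2)" using K by (rule mult_left_mono)
      then show ?thesis by linarith
    qed
    also have "\<dots> = - K / 2" by simp
    finally show ?thesis using der by blast
  qed
  have BW: "\<sigma> * x t $ i \<le> max (q * K * \<xi> $ i) (\<sigma> * x s $ i - K / 4 * (t - s))"
    if st: "t0 \<le> s" "s \<le> t" and K: "K > 0" and \<sigma>: "\<sigma> = 1 \<or> \<sigma> = -1"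
      and win: "\<forall>v\<in>{s-\<tau>..t}. \<forall>j. \<bar>x v $ j\<bar> \<le> K * \<xi> $ j" for s t K \<sigma> i
  proof -
    define G where "G v = \<sigma> * x v $ i + K / 4 * v" for v
    have acG: "abs_continuous_on s t G" unfolding G_def by (rule ACi[OF st])
    have "G t \<le> max (q * K * \<xi> $ i + K / 4 * t) (G s)"
    proof (rule ac_max_principle[OF st(2) acG NN])
      fix u assume u: "u \<in> {s..t}" "u \<notin> N" "G u > q * K * \<xi> $ i + K / 4 * t"
      have u0: "u \<ge> t0" using u st by auto
      have bigu: "\<sigma> * x u $ i > q * K * \<xi> $ i"
      proof -
        have "K / 4 * t - K / 4 * u \<ge> 0" using K u by auto
        then show ?thesis using u(3) by (simp add: G_def)
      qed
      have winu: "\<forall>v\<in>{u-\<tau>..u}. \<forall>j. \<bar>x v $ j\<bar> \<le> K * \<xi> $ j" using win u by auto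
      obtain D where D: "((\<lambda>v. \<sigma> * x v $ i) has_real_derivative D) (at u)" "D \<le> - K / 2"
        using DL[of K u \<sigma> i] K u0 u(2) \<sigma> winu bigu by auto
      have "(G has_real_derivative D + K / 4) (at u)" unfolding G_def
        using D(1) by (intro DERIV_add DERIV_cmult_Id)
      then show "\<exists>d<0. (G has_real_derivative d) (at u)" using D(2) K by (intro exI[of _ "D + K / 4"]) auto
    qed
    then have "\<sigma> * x t $ i + K / 4 * t \<le> q * K * \<xi> $ i + K / 4 * t \<or> \<sigma> * x t $ i + K / 4 * t \<le> \<sigma> * x s $ i + K / 4 * s"
      unfolding le_max_iff_disj G_def .
    moreover have "K / 4 * (t - s) = K / 4 * t - K / 4 * s" by (rule right_diff_distrib)
    ultimately show ?thesis unfolding le_max_iff_disj by linarith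
  qed
  have "\<forall>j. \<exists>B. \<forall>v\<in>{t0-\<tau>..t0}. \<bar>\<phi> j v\<bar> \<le> B"
  proof
    fix j
    have "compact (\<phi> j ` {t0-\<tau>..t0})"
      by (rule compact_continuous_image[OF continuous_on_subset[OF phi_cont] compact_Icc]) auto
    then have "bounded (\<phi> j ` {t0-\<tau>..t0})" by (rule compact_imp_bounded)
    then show "\<exists>B. \<forall>v\<in>{t0-\<tau>..t0}. \<bar>\<phi> j v\<bar> \<le> B" unfolding bounded_real by auto
  qed
  then obtain B\<phi> where B\<phi>: "\<forall>j. \<forall>v\<in>{t0-\<tau>..t0}. \<bar>\<phi> j v\<bar> \<le> B\<phi> j" using choice[of "\<lambda>j B. \<forall>v\<in>{t0-\<tau>..t0}. \<bar>\<phi> j v\<bar> \<le> B"] by blast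
  define K0 where "K0 = 1 + (\<Sum>j\<in>UNIV. \<bar>B\<phi> j\<bar> / \<xi> $ j)"
  have K0pos: "K0 > 0" unfolding K0_def using \<xi>pos by (smt (verit) divide_nonneg_pos abs_ge_zero sum_nonneg)
  have K0b: "\<bar>B\<phi> j\<bar> \<le> K0 * \<xi> $ j" for j
  proof -
    have "\<bar>B\<phi> j\<bar> / \<xi> $ j \<le> (\<Sum>j\<in>UNIV. \<bar>B\<phi> j\<bar> / \<xi> $ j)"
      by (intro member_le_sum) (auto intro!: divide_nonneg_pos \<xi>pos)
    then have "\<bar>B\<phi> j\<bar> / \<xi> $ j \<le> K0" unfolding K0_def by linarith
    then show ?thesis using \<xi>pos[of j] by (simp add: divide_le_eq)
  qed
  have initb: "\<bar>x v $ j\<bar> \<le> K0 * \<xi> $ j" if "v \<in> {t0-\<tau>..t0}" for v j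
  proof -
    have "x v $ j = \<phi> j v" using that by (intro init) auto
    moreover have "\<bar>\<phi> j v\<bar> \<le> B\<phi> j" using B\<phi> that by blast
    ultimately show ?thesis using K0b[of j] by linarith
  qed
  define K1 where "K1 = 2 * K0"
  have K1pos: "K1 > 0" using K0pos by (simp add: K1_def)
  have K01: "K0 * \<xi> $ j < K1 * \<xi> $ j" for j using K0pos \<xi>pos[of j] by (simp add: K1_def)
  have glob: "\<forall>v\<ge>t0-\<tau>. \<forall>j. \<bar>x v $ j\<bar> \<le> K1 * \<xi> $ j"
  proof (rule ccontr)
    assume "\<not> ?thesis"
    then obtain t1 j1 where t1: "t1 \<ge> t0 - \<tau>" "\<bar>x t1 $ j1\<bar> > K1 * \<xi> $ j1" by (auto simp: not_le)
    have t1t0: "t1 > t0"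
    proof (rule ccontr)
      assume "\<not> t1 > t0"
      then have "\<bar>x t1 $ j1\<bar> \<le> K0 * \<xi> $ j1" using t1 by (intro initb) auto
      then show False using t1 K01[of j1] by linarith
    qed
    define Z where "Z = (\<Union>j\<in>UNIV. {t0..t1} \<inter> (\<lambda>u. \<bar>x u $ j\<bar>) -` {K1 * \<xi> $ j..})"
    have Zc: "closed Z" unfolding Z_def
    proof (intro closed_UN ballI)
      fix j
      show "closed ({t0..t1} \<inter> (\<lambda>u. \<bar>x u $ j\<bar>) -` {K1 * \<xi> $ j..})"
        by (rule continuous_closed_preimage[OF continuous_on_rabs[OF xcont]]) auto
    qed simp
    have t1Z: "t1 \<in> Z" unfolding Z_def using t1 t1t0 by (auto intro!: exI[of _ j1])
    have Zb: "bdd_below Z" unfolding Z_def by (auto simp: bdd_below_def)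
    define T where "T = Inf Z"
    have TZ: "T \<in> Z" unfolding T_def using t1Z Zb Zc by (intro closed_contains_Inf) auto
    have Tr: "t0 \<le> T" "T \<le> t1" using TZ by (auto simp: Z_def)
    have t0Z: "t0 \<notin> Z"
    proof
      assume "t0 \<in> Z"
      then obtain j where "\<bar>x t0 $ j\<bar> \<ge> K1 * \<xi> $ j" by (auto simp: Z_def)
      moreover have "\<bar>x t0 $ j\<bar> \<le> K0 * \<xi> $ j" using tau_pos by (intro initb) auto
      ultimately show False using K01[of j] by linarith
    qed
    have Tgt: "T > t0" using Tr TZ t0Z by (cases "T = t0") auto
    have before: "\<bar>x u $ j\<bar> < K1 * \<xi> $ j" if "u \<in> {t0..<T}" for u j
    proof (rule ccontr)
      assume "\<not> ?thesis"
      then have "u \<in> Z" using that Tr unfolding Z_def by (auto simp: not_less intro!: exI[of _ j])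
      then have "T \<le> u" unfolding T_def using Zb by (rule cInf_lower)
      then show False using that by simp
    qed
    have atT: "\<bar>x T $ j\<bar> \<le> K1 * \<xi> $ j" for j
    proof -
      define R where "R = {t0..T} \<inter> (\<lambda>u. \<bar>x u $ j\<bar>) -` {..K1 * \<xi> $ j}"
      have "closed R" unfolding R_def
        by (rule continuous_closed_preimage[OF continuous_on_rabs[OF xcont]]) auto
      moreover have "{t0..<T} \<subseteq> R"
      proof
        fix u assume u: "u \<in> {t0..<T}"
        then have "\<bar>x u $ j\<bar> < K1 * \<xi> $ j" by (rule before)
        then show "u \<in> R" using u by (simp add: R_def)
      qed
      ultimately have "closure {t0..<T} \<subseteq> R" by (rule closure_minimal[rotated])
      then have "T \<in> R" using closure_atLeastLessThan[OF Tgt] Tgt by (metis atLeastAtMost_iff less_imp_le order_refl subsetD)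
      then show ?thesis by (simp add: R_def)
    qed
    have winT: "\<forall>v\<in>{t0-\<tau>..T}. \<forall>j. \<bar>x v $ j\<bar> \<le> K1 * \<xi> $ j"
    proof (intro ballI allI)
      fix v j assume v: "v \<in> {t0-\<tau>..T}"
      show "\<bar>x v $ j\<bar> \<le> K1 * \<xi> $ j"
      proof (cases "v < t0")
        case True
        then have "\<bar>x v $ j\<bar> \<le> K0 * \<xi> $ j" using v by (intro initb) auto
        then show ?thesis using K01[of j] by linarith
      next
        case False
        show ?thesis
        proof (cases "v = T")
          case True then show ?thesis using atT by simp
        next
          case False
          then show ?thesis using before[of v j] v \<open>\<not> v < t0\<close> by auto
        qed
      qed
    qed
    have "\<bar>x T $ i\<bar> < K1 * \<xi> $ i" for i
    proof -
      have lt: "\<sigma> * x T $ i < K1 * \<xi> $ i" if \<sigma>: "\<sigma> = 1 \<or> \<sigma> = -1" for \<sigma>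
      proof -
        have A: "\<sigma> * x T $ i \<le> max (q * K1 * \<xi> $ i) (\<sigma> * x t0 $ i - K1 / 4 * (T - t0))"
          by (rule BW[OF order_refl Tr(1) K1pos \<sigma> winT])
        have "q * K1 * \<xi> $ i < K1 * \<xi> $ i" using q1 K1pos \<xi>pos[of i] by simp
        moreover have "\<sigma> * x t0 $ i - K1 / 4 * (T - t0) < K1 * \<xi> $ i"
        proof -
          have "\<sigma> * x t0 $ i \<le> \<bar>x t0 $ i\<bar>" using \<sigma> by auto
          also have "\<dots> \<le> K0 * \<xi> $ i" using tau_pos by (intro initb) auto
          finally show ?thesis using K01[of i] K1pos Tr by (smt (verit) divide_nonneg_nonneg mult_nonneg_nonneg)
        qed
        ultimately show ?thesis using A by linarith
      qed
      from lt[of 1] lt[of "-1"] show ?thesis by auto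
    qed
    then show False using TZ unfolding Z_def by (auto simp: not_le[symmetric])
  qed
  have step: "\<forall>v\<ge>s + 4 * \<Xi>. \<forall>j. \<bar>x v $ j\<bar> \<le> q * K * \<xi> $ j"
    if s: "t0 \<le> s" and K: "K > 0" and hyp: "\<forall>v\<ge>s - \<tau>. \<forall>j. \<bar>x v $ j\<bar> \<le> K * \<xi> $ j" for s K
  proof (intro allI impI)
    fix v i assume v: "v \<ge> s + 4 * \<Xi>"
    have sv: "s \<le> v" using v \<Xi>pos by linarith
    have lt: "\<sigma> * x v $ i \<le> q * K * \<xi> $ i" if \<sigma>: "\<sigma> = 1 \<or> \<sigma> = -1" for \<sigma>
    proof -
      have A: "\<sigma> * x v $ i \<le> max (q * K * \<xi> $ i) (\<sigma> * x s $ i - K / 4 * (v - s))"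
        using hyp by (intro BW[OF s sv K \<sigma>]) auto
      have "\<sigma> * x s $ i \<le> \<bar>x s $ i\<bar>" using \<sigma> by auto
      also have "\<dots> \<le> K * \<xi> $ i" using hyp tau_pos by auto
      also have "\<dots> \<le> K * \<Xi>" using K \<Xi>ge[of i] by simp
      finally have "\<sigma> * x s $ i - K / 4 * (v - s) \<le> K * \<Xi> - K / 4 * (v - s)" by simp
      moreover have "K / 4 * (v - s) \<ge> K / 4 * (4 * \<Xi>)" using v K by (intro mult_left_mono) auto
      moreover have "q * K * \<xi> $ i \<ge> 0" using q0 K \<xi>nn[of i] by simp
      ultimately show ?thesis using A by (simp add: le_max_iff_disj)
    qed
    from lt[of 1] lt[of "-1"] show "\<bar>x v $ i\<bar> \<le> q * K * \<xi> $ i" by auto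
  qed
  have iter: "\<forall>v\<ge>t0 + real n * (4 * \<Xi> + \<tau>) - \<tau>. \<forall>j. \<bar>x v $ j\<bar> \<le> q ^ n * K1 * \<xi> $ j" for n
  proof (induction n)
    case 0
    then show ?case using glob by simp
  next
    case (Suc n)
    define s where "s = t0 + real n * (4 * \<Xi> + \<tau>)"
    have s0: "t0 \<le> s" using \<Xi>pos tau_pos by (simp add: s_def)
    have Kp: "q ^ n * K1 > 0" using qpos K1pos by simp
    have "\<forall>v\<ge>s + 4 * \<Xi>. \<forall>j. \<bar>x v $ j\<bar> \<le> q * (q ^ n * K1) * \<xi> $ j"
      using Suc.IH unfolding s_def[symmetric] by (intro step[OF s0 Kp]) auto
    moreover have "t0 + real (Suc n) * (4 * \<Xi> + \<tau>) - \<tau> = s + 4 * \<Xi>" by (simp add: s_def algebra_simps)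
    ultimately show ?case by (simp add: mult.assoc)
  qed
  show ?thesis
    unfolding tendsto_iff eventually_at_top_linorder
  proof (intro allI impI)
    fix e :: real assume e: "e > 0"
    define c where "c = K1 * \<Xi> * real CARD('n)"
    have cpos: "c > 0" using K1pos \<Xi>pos by (simp add: c_def)
    obtain n where n: "q ^ n < e / c" using real_arch_pow_inv[of "e / c" q] e cpos q1 by auto
    show "\<exists>N0. \<forall>v\<ge>N0. dist (x v) 0 < e"
    proof (intro exI allI impI)
      fix v assume v: "v \<ge> t0 + real n * (4 * \<Xi> + \<tau>)"
      have bd: "\<bar>x v $ j\<bar> \<le> q ^ n * K1 * \<Xi>" for j
      proof -
        have "\<bar>x v $ j\<bar> \<le> q ^ n * K1 * \<xi> $ j" using iter[of n] v tau_pos by auto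
        also have "\<dots> \<le> q ^ n * K1 * \<Xi>" using \<Xi>ge[of j] qpos K1pos by (intro mult_left_mono) auto
        finally show ?thesis .
      qed
      have "dist (x v) 0 = norm (x v)" by simp
      also have "\<dots> \<le> (\<Sum>j\<in>UNIV. \<bar>x v $ j\<bar>)" by (rule norm_le_l1_cart)
      also have "\<dots> \<le> (\<Sum>j\<in>(UNIV::'n set). q ^ n * K1 * \<Xi>)" using bd by (intro sum_mono) auto
      also have "\<dots> = q ^ n * c" by (simp add: c_def)
      also have "\<dots> < e / c * c" using n cpos by (intro mult_strict_right_mono) auto
      also have "\<dots> = e" using cpos by simp
      finally show "dist (x v) 0 < e" .
    qed
  qed
qed

end
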